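(* Let $\mathcal{M}\subset\mathbb{R}^n$ be a locally symmetric $C^2$ submanifold and let $\sigma_*$ be a characteristic permutation of $\mathcal{M}$. Then every set in the partition $P(\sigma_* )$ consists of consecutive integers of $\mathbb{N}_n$.
   Context: $\Sigma^n$ is the group of permutations of $\mathbb{N}_n=\{1,\dots,n\}$, acting on $\mathbb{R}^n$ by $(\sigma x)_i=x_{\sigma^{-1}(i)}$. $P(\sigma)$ is the partition of $\mathbb{N}_n$ into the orbits of $\sigma$. For $x\in\mathbb{R}^n$, $P(x)$ is the partition in which $i,j$ lie in the same set iff $x_i=x_j$; $\Delta(\sigma)=\{x:P(x)=P(\sigma)\}$. $\mathbb{R}^n_{\ge}=\{x:x_1\ge\cdots\ge x_n\}$; $B(x,\delta)$ is the open Euclidean ball. A set $S\subset\mathbb{R}^n$ is locally symmetric if $S\cap\mathbb{R}^n_{\ge}\ne\emptyset$ and for every $x\in S$ there is $\delta>0$ with $\sigma(S\cap B(x,\delta))=S\cap B(x,\delta)$ for all $y\in S\cap B(x,\delta)$ and all $\sigma$ with $\sigma y=y$. A locally symmetric $C^2$ submanifold is a connected $C^2$ submanifold of $\mathbb{R}^n$ without boundary which is a locally symmetric set. A characteristic permutation of $\mathcal{M}$ is a $\sigma_*\in\Sigma^n$ for which there exist $\bar x\in\mathcal{M}$ and $\delta>0$ with $\mathcal{M}\cap B(\bar x,\delta)\subset\Delta(\sigma_* )$. *)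

theory Defs
  imports "HOL-Analysis.Analysis"
begin

text \<open>R^n is modelled as real^'n, where the index type 'n is a finite linearly
ordered type (order-isomorphic to {1..n}); permutations of N_n are the
permutations of UNIV :: 'n set.\<close>

definition perm_act :: "('n::finite \<Rightarrow> 'n) \<Rightarrow> real^'n \<Rightarrow> real^'n" where
  "perm_act \<sigma> x = (\<chi> i. x $ (inv \<sigma> i))"

definition perm_partition :: "('n::finite \<Rightarrow> 'n) \<Rightarrow> 'n set set" where
  "perm_partition \<sigma> = (\<lambda>i. {j. \<exists>k::nat. (\<sigma> ^^ k) i = j}) ` UNIV"

definition vec_partition :: "real^'n::finite \<Rightarrow> 'n set set" where
  "vec_partition x = (\<lambda>i. {j. x $ j = x $ i}) ` UNIV"

definition Delta :: "('n::finite \<Rightarrow> 'n) \<Rightarrow> (real^'n) set" where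
  "Delta \<sigma> = {x. vec_partition x = perm_partition \<sigma>}"

definition ordered_cone :: "(real^'n::{finite,linorder}) set" where
  "ordered_cone = {x. \<forall>i j. i \<le> j \<longrightarrow> x $ j \<le> x $ i}"

definition locally_symmetric :: "(real^'n::{finite,linorder}) set \<Rightarrow> bool" where
  "locally_symmetric S \<longleftrightarrow>
     S \<inter> ordered_cone \<noteq> {} \<and>
     (\<forall>x\<in>S. \<exists>\<delta>>0. \<forall>y\<in>S \<inter> ball x \<delta>. \<forall>\<sigma>.
        \<sigma> permutes (UNIV :: 'n set) \<and> perm_act \<sigma> y = y \<longrightarrow>
        perm_act \<sigma> ` (S \<inter> ball x \<delta>) = S \<inter> ball x \<delta>)"

definition C2_on :: "('a::euclidean_space \<Rightarrow> 'b::euclidean_space) \<Rightarrow> 'a set \<Rightarrow> bool" where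
  "C2_on f U \<longleftrightarrow> (\<exists>f' f''.
     (\<forall>x\<in>U. (f has_derivative blinfun_apply (f' x)) (at x)) \<and>
     (\<forall>x\<in>U. (f' has_derivative blinfun_apply (f'' x)) (at x)) \<and>
     continuous_on U f'')"

definition C2_submanifold :: "('a::euclidean_space) set \<Rightarrow> bool" where
  "C2_submanifold M \<longleftrightarrow>
     (\<forall>x\<in>M. \<exists>U W (L::'a set) (\<phi>::'a \<Rightarrow> 'a) (\<psi>::'a \<Rightarrow> 'a). open U \<and> x \<in> U \<and> open W \<and> subspace L \<and>
        C2_on \<phi> U \<and> C2_on \<psi> W \<and> \<phi> ` U = W \<and>
        (\<forall>y\<in>U. \<psi> (\<phi> y) = y) \<and> (\<forall>z\<in>W. \<phi> (\<psi> z) = z) \<and>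
        \<phi> ` (M \<inter> U) = W \<inter> L)"

definition locally_symmetric_C2_submanifold :: "(real^'n::{finite,linorder}) set \<Rightarrow> bool" where
  "locally_symmetric_C2_submanifold M \<longleftrightarrow>
     connected M \<and> C2_submanifold M \<and> locally_symmetric M"

definition characteristic_perm :: "(real^'n::{finite,linorder}) set \<Rightarrow> ('n \<Rightarrow> 'n) \<Rightarrow> bool" where
  "characteristic_perm M \<sigma> \<longleftrightarrow> \<sigma> permutes (UNIV :: 'n set) \<and>
     (\<exists>xb\<in>M. \<exists>\<delta>>0. M \<inter> ball xb \<delta> \<subseteq> Delta \<sigma>)"

end

theory Submission
  imports Defs
begin

definition sw :: "'n::finite \<Rightarrow> 'n \<Rightarrow> real^'n \<Rightarrow> real^'n" where
  "sw p q x = (\<chi> i. x $ Transposition.transpose p q i)"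

lemma perm_act_sw: "perm_act (Transposition.transpose p q) = sw p q"
  by (rule ext) (simp add: perm_act_def sw_def Transposition.inv_transpose_eq)

lemma sw_nth: "sw p q x $ i = x $ Transposition.transpose p q i"
  by (simp add: sw_def)

lemma sw_sw[simp]: "sw p q (sw p q x) = x"
  by (simp add: vec_eq_iff sw_nth)

lemma sw_diff: "sw p q (x - y) = sw p q x - sw p q y"
  by (simp add: vec_eq_iff sw_nth)

lemma sw_add: "sw p q (x + y) = sw p q x + sw p q y"
  by (simp add: vec_eq_iff sw_nth)

lemma sw_fix_iff: "sw p q x = x \<longleftrightarrow> x $ p = x $ q"
proof
  assume "sw p q x = x"
  then have "sw p q x $ p = x $ p" by simp
  then show "x $ p = x $ q" by (simp add: sw_nth)
next
  assume "x $ p = x $ q"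
  then show "sw p q x = x"
    by (auto simp: vec_eq_iff sw_nth Transposition.transpose_def)
qed

lemma sw_norm: "norm (sw p q x) = norm x"
proof -
  have "sw p q x \<bullet> sw p q x = x \<bullet> x"
    unfolding inner_vec_def sw_nth
    using sum.permute[OF permutes_swap_id[of p UNIV q], of "\<lambda>i. x $ i \<bullet> x $ i"]
    by (simp add: comp_def)
  then show ?thesis by (simp add: norm_eq_sqrt_inner)
qed

lemma sw_dist: "dist (sw p q x) (sw p q y) = dist x y"
  by (simp add: dist_norm sw_diff[symmetric] sw_norm)

lemma SD:
  fixes f :: "'a::euclidean_space \<Rightarrow> 'b::euclidean_space"
  assumes S: "open S" "x0 \<in> S"
    and d: "\<forall>x\<in>S. (f has_derivative blinfun_apply (f' x)) (at x)"
    and c: "continuous (at x0) f'" and e: "e > 0"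
  shows "\<exists>r>0. ball x0 r \<subseteq> S \<and> (\<forall>a\<in>ball x0 r. \<forall>b\<in>ball x0 r.
            norm (f a - f b - f' x0 (a - b)) \<le> e * norm (a - b))"
proof -
  obtain r1 where r1: "r1 > 0" "\<forall>x. dist x x0 < r1 \<longrightarrow> dist (f' x) (f' x0) < e"
    using c e unfolding continuous_at_eps_delta by blast
  obtain r2 where r2: "r2 > 0" "ball x0 r2 \<subseteq> S"
    using S open_contains_ball by blast
  define r where "r = min r1 r2"
  have r: "r > 0" "ball x0 r \<subseteq> S" using r1 r2 by (auto simp: r_def)
  define h where "h x = f x - f' x0 x" for x
  have hd: "(h has_derivative blinfun_apply (f' x - f' x0)) (at x within ball x0 r)"
    if "x \<in> ball x0 r" for x
  proof -
    have "(f has_derivative blinfun_apply (f' x)) (at x)" using d r that by blast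
    then have "(h has_derivative (\<lambda>v. f' x v - f' x0 v)) (at x)"
      unfolding h_def by (auto intro!: derivative_eq_intros)
    moreover have "blinfun_apply (f' x - f' x0) = (\<lambda>v. f' x v - f' x0 v)"
      by (rule ext) (simp add: blinfun.diff_left)
    ultimately show ?thesis
      by (simp add: has_derivative_at_withinI)
  qed
  have hb: "onorm (blinfun_apply (f' x - f' x0)) \<le> e" if "x \<in> ball x0 r" for x
  proof -
    have "dist x x0 < r1" using that by (simp add: r_def dist_commute)
    then have "dist (f' x) (f' x0) < e" using r1 by blast
    then show ?thesis by (simp add: dist_norm norm_blinfun.rep_eq[symmetric])
  qed
  have "norm (h a - h b) \<le> e * norm (a - b)" if "a \<in> ball x0 r" "b \<in> ball x0 r" for a b
    using differentiable_bound[OF convex_ball hd hb that] by blast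
  moreover have "h a - h b = f a - f b - f' x0 (a - b)" for a b
    by (simp add: h_def blinfun.diff_right)
  ultimately show ?thesis using r by metis
qed

lemma e1_aux:
  fixes x :: real
  assumes "0 \<le> x"
  shows "1 / (2 * (x + 1)) > 0" "x * (1 / (2 * (x + 1))) < 1"
proof -
  have p: "2 * (x + 1) > 0" using assms by (simp add: add_nonneg_pos)
  then show "1 / (2 * (x + 1)) > 0" by simp
  have "x < 2 * (x + 1)" using assms by (simp add: algebra_simps)
  then show "x * (1 / (2 * (x + 1))) < 1" using p by (simp add: divide_less_eq)
qed

lemma closed_step:
  fixes M :: "(real^'n::finite) set"
  assumes sub: "C2_submanifold M"
    and sym: "\<forall>x\<in>M. \<exists>\<delta>>0. \<forall>y\<in>M \<inter> ball x \<delta>. \<forall>\<sigma>.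
        \<sigma> permutes (UNIV :: 'n set) \<and> perm_act \<sigma> y = y \<longrightarrow>
        perm_act \<sigma> ` (M \<inter> ball x \<delta>) = M \<inter> ball x \<delta>"
    and yM: "y \<in> M"
    and near: "\<forall>\<eta>>0. \<exists>y'\<in>M. dist y' y < \<eta> \<and> (\<exists>\<epsilon>>0. M \<inter> ball y' \<epsilon> \<subseteq> {w. w$p = w$q})"
  shows "\<exists>\<epsilon>>0. M \<inter> ball y \<epsilon> \<subseteq> {w. w$p = w$q}"
proof -
  define H where "H = {w::real^'n. w$p = w$q}"
  define g where "g = sw p q"
  have gH: "g w = w \<longleftrightarrow> w \<in> H" for w by (simp add: g_def H_def sw_fix_iff)
  have yH: "y \<in> H"
  proof (rule ccontr)
    assume "y \<notin> H"
    then have c: "\<bar>y$p - y$q\<bar> > 0" by (simp add: H_def)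
    obtain y' \<epsilon> where y': "dist y' y < \<bar>y$p - y$q\<bar>/2" "\<epsilon>>0" "M \<inter> ball y' \<epsilon> \<subseteq> H" "y' \<in> M"
    proof -
      have "\<bar>y$p - y$q\<bar>/2 > 0" using c by simp
      then show ?thesis using near that unfolding H_def by blast
    qed
    have "y' \<in> H" using y' by auto
    moreover have "\<bar>y'$p - y$p\<bar> \<le> dist y' y" "\<bar>y'$q - y$q\<bar> \<le> dist y' y"
      using component_le_norm_cart[of "y' - y" p] component_le_norm_cart[of "y' - y" q]
      by (simp_all add: dist_norm)
    ultimately show False using y' by (auto simp: H_def)
  qed
  have gy: "g y = y" using yH gH by simp
  obtain \<delta>1 where \<delta>1: "\<delta>1 > 0" "\<forall>z\<in>M \<inter> ball y \<delta>1. \<forall>\<sigma>.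
        \<sigma> permutes (UNIV :: 'n set) \<and> perm_act \<sigma> z = z \<longrightarrow>
        perm_act \<sigma> ` (M \<inter> ball y \<delta>1) = M \<inter> ball y \<delta>1"
    using sym yM by blast
  have gimg: "g ` (M \<inter> ball y \<delta>1) = M \<inter> ball y \<delta>1"
  proof -
    have py: "perm_act (Transposition.transpose p q) y = y" using gy by (simp add: perm_act_sw g_def)
    have "y \<in> M \<inter> ball y \<delta>1" using yM \<delta>1(1) by simp
    then have "perm_act (Transposition.transpose p q) ` (M \<inter> ball y \<delta>1) = M \<inter> ball y \<delta>1"
      using \<delta>1(2) py permutes_swap_id[of p UNIV q] by blast
    then show ?thesis by (simp add: perm_act_sw g_def)
  qed
  have gd: "dist (g z) y = dist z y" for z using sw_dist[of p q z y] gy by (simp add: g_def)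
  have gM: "g z \<in> M" if "z \<in> M" "dist z y < \<delta>1" for z
  proof -
    have "z \<in> M \<inter> ball y \<delta>1" using that by (simp add: dist_commute)
    then have "g z \<in> g ` (M \<inter> ball y \<delta>1)" by (rule imageI)
    then show "g z \<in> M" using gimg by blast
  qed
  obtain U W V and \<phi> \<psi> :: "real^'n \<Rightarrow> real^'n" where ch: "open U" "y \<in> U" "open W" "subspace (V::(real^'n) set)"
      "C2_on \<phi> U" "C2_on \<psi> W" "\<phi> ` U = W"
      "\<forall>z\<in>U. \<psi> (\<phi> z) = z" "\<forall>z\<in>W. \<phi> (\<psi> z) = z" "\<phi> ` (M \<inter> U) = W \<inter> V"
    using sub[unfolded C2_submanifold_def, rule_format, OF yM] by blast
  obtain \<phi>' \<phi>'' where ph: "\<forall>x\<in>U. (\<phi> has_derivative blinfun_apply (\<phi>' x)) (at x)"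
    using ch(5) unfolding C2_on_def by blast
  obtain \<psi>' \<psi>'' where ps: "\<forall>x\<in>W. (\<psi> has_derivative blinfun_apply (\<psi>' x)) (at x)"
      "\<forall>x\<in>W. (\<psi>' has_derivative blinfun_apply (\<psi>'' x)) (at x)"
    using ch(6) unfolding C2_on_def by blast
  define w0 where "w0 = \<phi> y"
  have w0W: "w0 \<in> W" using ch(2,7) w0_def by blast
  have psw0: "\<psi> w0 = y" using ch(2,8) w0_def by blast
  have contphi: "continuous (at z) \<phi>" if "z \<in> U" for z
    by (rule has_derivative_continuous[OF ph[rule_format, OF that]])
  have contpsi: "continuous (at w) \<psi>" if "w \<in> W" for w
    by (rule has_derivative_continuous[OF ps(1)[rule_format, OF that]])
  have contpsi': "continuous (at w0) \<psi>'"
    by (rule has_derivative_continuous[OF ps(2)[rule_format, OF w0W]])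
  have WV_M: "\<psi> a \<in> M \<inter> U" if "a \<in> W \<inter> V" for a
  proof -
    have "a \<in> \<phi> ` (M \<inter> U)" using that ch(10) by simp
    then obtain m where "m \<in> M \<inter> U" "a = \<phi> m" by (rule imageE)
    then show ?thesis using ch(8) by auto
  qed
  have M_WV: "\<phi> z \<in> W \<inter> V" if "z \<in> M \<inter> U" for z
    using that ch(10) by blast
  define E where "E = \<phi>' y"
  define D where "D = \<psi>' w0"
  have ED: "E (D v) = v" for v
  proof -
    have d1: "(\<psi> has_derivative blinfun_apply D) (at w0)" using ps w0W D_def by blast
    have d2: "(\<phi> has_derivative blinfun_apply E) (at (\<psi> w0))" using ph ch(2) psw0 E_def by simp
    have "((\<phi> \<circ> \<psi>) has_derivative (blinfun_apply E \<circ> blinfun_apply D)) (at w0)"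
      using diff_chain_at[OF d1 d2] .
    then have "((\<lambda>x. x) has_derivative (blinfun_apply E \<circ> blinfun_apply D)) (at w0)"
      by (rule has_derivative_transform_within_open[OF _ ch(3) w0W]) (simp add: ch(9))
    moreover have "((\<lambda>x. x) has_derivative (\<lambda>x. x)) (at w0)" by (rule has_derivative_ident)
    ultimately have "(blinfun_apply E \<circ> blinfun_apply D) = (\<lambda>x. x)"
      by (rule has_derivative_unique)
    then show ?thesis by (metis comp_apply)
  qed
  define lf where "lf w = w$p - w$q" for w :: "real^'n"
  have lflin: "bounded_linear lf" unfolding lf_def
    by (intro bounded_linear_sub bounded_linear_vec_nth)
  have lfH: "lf w = 0 \<longleftrightarrow> w \<in> H" for w by (simp add: lf_def H_def)
  have loc0: "lf (\<psi>' w' v) = 0"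
    if w': "w' \<in> W \<inter> V" and v: "v \<in> V" and e: "\<epsilon> > 0" and hw: "\<forall>w\<in>W \<inter> V \<inter> ball w' \<epsilon>. \<psi> w \<in> H"
    for w' v \<epsilon>
  proof -
    obtain \<rho> where \<rho>: "\<rho> > 0" "ball w' \<rho> \<subseteq> W" using w' ch(3) open_contains_ball by blast
    define \<epsilon>' where "\<epsilon>' = min \<epsilon> \<rho>"
    have d1: "((\<lambda>t::real. w' + t *\<^sub>R v) has_derivative (\<lambda>t. t *\<^sub>R v)) (at 0)"
      by (auto intro!: derivative_eq_intros)
    have d2: "(\<psi> has_derivative blinfun_apply (\<psi>' w')) (at ((\<lambda>t::real. w' + t *\<^sub>R v) 0))"
      using ps w' by simp
    have d3: "((\<psi> \<circ> (\<lambda>t::real. w' + t *\<^sub>R v)) has_derivative (blinfun_apply (\<psi>' w') \<circ> (\<lambda>t. t *\<^sub>R v))) (at 0)"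
      using diff_chain_at[OF d1 d2] .
    have d4: "((\<lambda>t. lf ((\<psi> \<circ> (\<lambda>t::real. w' + t *\<^sub>R v)) t)) has_derivative (\<lambda>t. lf ((blinfun_apply (\<psi>' w') \<circ> (\<lambda>t. t *\<^sub>R v)) t))) (at 0)"
      using bounded_linear.has_derivative[OF lflin d3] .
    have "(\<lambda>t. lf ((blinfun_apply (\<psi>' w') \<circ> (\<lambda>t. t *\<^sub>R v)) t)) = (\<lambda>t. lf (\<psi>' w' v) * t)"
      by (rule ext) (simp add: blinfun.scaleR_right lf_def algebra_simps)
    with d4 have d5: "((\<lambda>t. lf (\<psi> (w' + t *\<^sub>R v))) has_real_derivative lf (\<psi>' w' v)) (at 0)"
      by (simp add: has_field_derivative_def comp_def)
    define d where "d = \<epsilon>' / (norm v + 1)"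
    have dpos: "d > 0" using e \<rho> unfolding d_def \<epsilon>'_def
      by (intro divide_pos_pos) (auto simp: add_nonneg_pos)
    have "lf (\<psi> (w' + 0 *\<^sub>R v)) = lf (\<psi> (w' + t *\<^sub>R v))" if t: "\<bar>0 - t\<bar> < d" for t
    proof -
      have "norm (t *\<^sub>R v) = \<bar>t\<bar> * norm v" by simp
      also have "\<dots> \<le> d * norm v" using t by (intro mult_right_mono) auto
      also have "\<dots> < \<epsilon>'"
      proof -
        have nz: "norm v + 1 \<noteq> 0" by (metis add_nonneg_pos norm_ge_zero zero_less_one less_irrefl)
        have "d * (norm v + 1) = \<epsilon>'" unfolding d_def using nz by simp
        then show ?thesis using dpos by (simp add: algebra_simps)
      qed
      finally have n: "norm (t *\<^sub>R v) < \<epsilon>'" .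
      have "w' + t *\<^sub>R v \<in> ball w' \<epsilon>'" using n by (simp add: dist_norm)
      then have b1: "w' + t *\<^sub>R v \<in> ball w' \<rho>" "w' + t *\<^sub>R v \<in> ball w' \<epsilon>"
        unfolding \<epsilon>'_def by auto
      have "w' + t *\<^sub>R v \<in> V"
        using w' v ch(4) by (intro subspace_add subspace_scale) auto
      then have i: "w' + t *\<^sub>R v \<in> W \<inter> V \<inter> ball w' \<epsilon>"
        using b1 \<rho>(2) by blast
      have "\<psi> (w' + t *\<^sub>R v) \<in> H" using hw i by blast
      moreover have "\<psi> w' \<in> H" using hw w' e by auto
      ultimately show ?thesis using lfH by (metis add_0 scale_zero_left add.right_neutral)
    qed
    then show ?thesis using DERIV_local_const[OF d5 dpos] by blast
  qed
  have stepA: "D v \<in> H" if v: "v \<in> V" for v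
  proof (rule ccontr)
    assume "D v \<notin> H"
    then have c: "\<bar>lf (D v)\<bar> > 0" using lfH by simp
    have cv: "continuous (at w0) (\<lambda>w. lf (\<psi>' w v))"
      by (rule bounded_linear.continuous[OF lflin, OF bounded_bilinear.continuous[OF bounded_bilinear_blinfun_apply contpsi' continuous_const]])
    obtain r where r: "r > 0" "\<forall>w. dist w w0 < r \<longrightarrow> dist (lf (\<psi>' w v)) (lf (\<psi>' w0 v)) < \<bar>lf (D v)\<bar>"
      using cv c unfolding continuous_at_eps_delta by blast
    obtain rU where rU: "rU > 0" "ball y rU \<subseteq> U" using ch(1,2) open_contains_ball by blast
    obtain s0 where s0: "s0 > 0" "\<forall>z. dist z y < s0 \<longrightarrow> dist (\<phi> z) w0 < r"
      using contphi[OF ch(2)] r unfolding continuous_at_eps_delta w0_def by blast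
    define s where "s = min s0 rU"
    have "s > 0" using s0 rU by (simp add: s_def)
    then obtain y' \<epsilon>1 where y': "y' \<in> M" "dist y' y < s" "\<epsilon>1 > 0" "M \<inter> ball y' \<epsilon>1 \<subseteq> H"
      using near unfolding H_def by blast
    have y'U: "y' \<in> U" using y' rU by (auto simp: s_def dist_commute)
    define w' where "w' = \<phi> y'"
    have w'WV: "w' \<in> W \<inter> V" using M_WV y' y'U w'_def by blast
    have psw': "\<psi> w' = y'" using ch(8) y'U w'_def by blast
    obtain \<epsilon> where \<epsilon>: "\<epsilon> > 0" "\<forall>w. dist w w' < \<epsilon> \<longrightarrow> dist (\<psi> w) y' < \<epsilon>1"
    proof -
      have "continuous (at w') \<psi>" using contpsi w'WV by blast
      then have "\<exists>\<epsilon>>0. \<forall>w. dist w w' < \<epsilon> \<longrightarrow> dist (\<psi> w) y' < \<epsilon>1"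
        using y'(3) psw' unfolding continuous_at_eps_delta by blast
      then show ?thesis using that by blast
    qed
    have "\<forall>w\<in>W \<inter> V \<inter> ball w' \<epsilon>. \<psi> w \<in> H"
    proof
      fix w assume w: "w \<in> W \<inter> V \<inter> ball w' \<epsilon>"
      then have "\<psi> w \<in> M" using WV_M by blast
      moreover have "dist (\<psi> w) y' < \<epsilon>1" using \<epsilon> w by (auto simp: dist_commute)
      ultimately show "\<psi> w \<in> H" using y' by (auto simp: dist_commute)
    qed
    then have "lf (\<psi>' w' v) = 0" using loc0 w'WV v \<epsilon> by blast
    moreover have "dist w' w0 < r" using s0 y' by (simp add: s_def w'_def)
    ultimately show False using r(2)[rule_format, of w'] D_def by (simp add: dist_real_def)
  qed
  define e1 where "e1 = 1 / (2 * (norm E + 1))"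
  have e1: "e1 > 0" "norm E * e1 < 1"
    unfolding e1_def using e1_aux[OF norm_ge_zero[of E]] by auto
  obtain r where r: "r > 0" "ball w0 r \<subseteq> W"
    "\<forall>a\<in>ball w0 r. \<forall>b\<in>ball w0 r. norm (\<psi> a - \<psi> b - D (a - b)) \<le> e1 * norm (a - b)"
    using SD[OF ch(3) w0W ps(1) contpsi' e1(1)] unfolding D_def by blast
  obtain \<rho>0 where \<rho>0: "\<rho>0 > 0" "\<forall>z. dist z y < \<rho>0 \<longrightarrow> dist (\<phi> z) w0 < r"
    using contphi[OF ch(2)] r(1) unfolding continuous_at_eps_delta w0_def by blast
  obtain rU where rU: "rU > 0" "ball y rU \<subseteq> U" using ch(1,2) open_contains_ball by blast
  define \<rho> where "\<rho> = min (min \<rho>0 rU) \<delta>1"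
  have \<rho>: "\<rho> > 0" using \<rho>0 rU \<delta>1 by (simp add: \<rho>_def)
  obtain r0 where r0: "r0 > 0" "\<forall>w. dist w w0 < r0 \<longrightarrow> dist (\<psi> w) y < \<rho>"
    using contpsi[OF w0W] \<rho> psw0 unfolding continuous_at_eps_delta by metis
  define r' where "r' = min r0 r"
  have fixpt: "\<psi> a \<in> H" if a: "a \<in> W \<inter> V" "dist a w0 < r'" for a
  proof -
    define P where "P = \<psi> a"
    have PM: "P \<in> M" "P \<in> U" using WV_M a unfolding P_def by auto
    have dP: "dist P y < \<rho>" using r0 a unfolding P_def r'_def by simp
    have gPM: "g P \<in> M" using gM PM dP by (simp add: \<rho>_def)
    have dgP: "dist (g P) y < \<rho>" using gd dP by simp
    have gPU: "g P \<in> U" using dgP rU by (auto simp: \<rho>_def dist_commute)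
    define b where "b = \<phi> (g P)"
    have bWV: "b \<in> W \<inter> V" using M_WV gPM gPU unfolding b_def by blast
    have psb: "\<psi> b = g P" using ch(8) gPU unfolding b_def by blast
    have db: "dist b w0 < r" using \<rho>0 dgP unfolding b_def \<rho>_def by simp
    have aball: "a \<in> ball w0 r" "b \<in> ball w0 r" using a db by (auto simp: r'_def dist_commute)
    have est: "norm (P - g P - D (a - b)) \<le> e1 * norm (a - b)"
      using r(3) aball psb unfolding P_def by metis
    have abV: "a - b \<in> V" using ch(4) a bWV by (intro subspace_diff) auto
    define u where "u = D (a - b)"
    have gu: "g u = u" using stepA[OF abV] gH unfolding u_def by simp
    define ee where "ee = P - g P - u"
    have "g ee = g (P - g P) - g u" unfolding ee_def g_def by (rule sw_diff)
    also have "\<dots> = g P - P - u" using gu unfolding g_def by (simp only: sw_diff sw_sw)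
    finally have gee: "g ee = g P - P - u" .
    have "ee + g ee = (P - g P - u) + (g P - P - u)" by (subst gee) (simp add: ee_def)
    also have "\<dots> = - (2 *\<^sub>R u)" by (simp add: algebra_simps scaleR_2)
    finally have "ee + g ee = - (2 *\<^sub>R u)" .
    then have "2 * norm u = norm (ee + g ee)" by simp
    also have "\<dots> \<le> norm ee + norm (g ee)" by (rule norm_triangle_ineq)
    also have "\<dots> = 2 * norm ee" by (simp add: g_def sw_norm)
    finally have nu: "norm u \<le> e1 * norm (a - b)" using est unfolding ee_def u_def by simp
    have "a - b = E u" unfolding u_def by (simp add: ED)
    then have "norm (a - b) \<le> norm E * norm u" by (simp add: norm_blinfun)
    also have "\<dots> \<le> norm E * (e1 * norm (a - b))" using nu by (simp add: mult_left_mono)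
    finally have "norm (a - b) \<le> (norm E * e1) * norm (a - b)" by (simp add: mult.assoc)
    with e1(2) have "norm (a - b) = 0"
      by (metis mult_le_cancel_right1 norm_ge_zero order.strict_iff_not not_le linorder_neqE_linordered_idom)
    then have "a = b" by simp
    then have "g (\<psi> a) = \<psi> a" using psb unfolding P_def by simp
    then show ?thesis using gH by simp
  qed
  obtain \<epsilon>0 where \<epsilon>0: "\<epsilon>0 > 0" "\<forall>z. dist z y < \<epsilon>0 \<longrightarrow> dist (\<phi> z) w0 < r'"
  proof -
    have "r' > 0" using r0 r by (simp add: r'_def)
    then show ?thesis using contphi[OF ch(2)] that unfolding continuous_at_eps_delta w0_def by blast
  qed
  define \<epsilon> where "\<epsilon> = min \<epsilon>0 rU"
  have "M \<inter> ball y \<epsilon> \<subseteq> H"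
  proof
    fix z assume z: "z \<in> M \<inter> ball y \<epsilon>"
    then have zU: "z \<in> U" using rU by (auto simp: \<epsilon>_def)
    have "\<phi> z \<in> W \<inter> V" using M_WV z zU by blast
    moreover have "dist (\<phi> z) w0 < r'" using \<epsilon>0 z by (auto simp: \<epsilon>_def dist_commute)
    ultimately have "\<psi> (\<phi> z) \<in> H" by (rule fixpt)
    then show "z \<in> H" using ch(8) zU by simp
  qed
  moreover have "\<epsilon> > 0" using \<epsilon>0 rU by (simp add: \<epsilon>_def)
  ultimately show ?thesis unfolding H_def by blast
qed

lemma core:
  fixes M :: "(real^'n::finite) set"
  assumes conn: "connected M" and sub: "C2_submanifold M"
    and sym: "\<forall>x\<in>M. \<exists>\<delta>>0. \<forall>y\<in>M \<inter> ball x \<delta>. \<forall>\<sigma>.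
        \<sigma> permutes (UNIV :: 'n set) \<and> perm_act \<sigma> y = y \<longrightarrow>
        perm_act \<sigma> ` (M \<inter> ball x \<delta>) = M \<inter> ball x \<delta>"
    and y0: "y0 \<in> M" "e0 > 0" "M \<inter> ball y0 e0 \<subseteq> {w. w$p = w$q}"
  shows "M \<subseteq> {w. w$p = w$q}"
proof -
  define H where "H = {w::real^'n. w$p = w$q}"
  define Og where "Og = {y\<in>M. \<exists>\<epsilon>>0. M \<inter> ball y \<epsilon> \<subseteq> H}"
  define U1 where "U1 = \<Union> {ball y \<epsilon> | y \<epsilon>. y \<in> M \<and> \<epsilon> > 0 \<and> M \<inter> ball y \<epsilon> \<subseteq> H}"
  define U2 where "U2 = \<Union> {ball y \<eta> | y \<eta>. y \<in> M \<and> \<eta> > 0 \<and> ball y \<eta> \<inter> Og = {}}"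
  have o1: "open U1" unfolding U1_def by (rule open_Union) auto
  have o2: "open U2" unfolding U2_def by (rule open_Union) auto
  have U1O: "z \<in> Og" if z1: "z \<in> U1" "z \<in> M" for z
  proof -
    obtain y \<epsilon> where y: "z \<in> ball y \<epsilon>" "M \<inter> ball y \<epsilon> \<subseteq> H" using z1(1) unfolding U1_def by blast
    define \<epsilon>' where "\<epsilon>' = \<epsilon> - dist y z"
    have "\<epsilon>' > 0" using y(1) by (simp add: \<epsilon>'_def)
    moreover have "ball z \<epsilon>' \<subseteq> ball y \<epsilon>"
    proof
      fix w assume "w \<in> ball z \<epsilon>'"
      then have "dist z w < \<epsilon>'" by simp
      moreover have "dist y w \<le> dist y z + dist z w" by (rule dist_triangle)
      ultimately show "w \<in> ball y \<epsilon>" by (simp add: \<epsilon>'_def)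
    qed
    ultimately show ?thesis using y z1(2) unfolding Og_def by blast
  qed
  have U2O: "z \<notin> Og" if "z \<in> U2" for z
    using that unfolding U2_def by blast
  have dis: "U1 \<inter> U2 \<inter> M = {}" using U1O U2O by blast
  have cov: "M \<subseteq> U1 \<union> U2"
  proof
    fix z assume z: "z \<in> M"
    show "z \<in> U1 \<union> U2"
    proof (cases "z \<in> Og")
      case True
      then obtain \<epsilon> where "\<epsilon> > 0" "M \<inter> ball z \<epsilon> \<subseteq> H" unfolding Og_def by blast
      then have "ball z \<epsilon> \<in> {ball y \<epsilon> | y \<epsilon>. y \<in> M \<and> \<epsilon> > 0 \<and> M \<inter> ball y \<epsilon> \<subseteq> H}"
        using z by blast
      moreover have "z \<in> ball z \<epsilon>" using \<open>\<epsilon> > 0\<close> by simp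
      ultimately have "z \<in> U1" unfolding U1_def by (rule UnionI)
      then show ?thesis by blast
    next
      case False
      then have "\<not> (\<exists>\<epsilon>>0. M \<inter> ball z \<epsilon> \<subseteq> {w. w$p = w$q})" using z unfolding Og_def H_def by blast
      then have "\<not> (\<forall>\<eta>>0. \<exists>y'\<in>M. dist y' z < \<eta> \<and> (\<exists>\<epsilon>>0. M \<inter> ball y' \<epsilon> \<subseteq> {w. w$p = w$q}))"
        using closed_step[OF sub sym z] by blast
      then obtain \<eta> where \<eta>: "\<eta> > 0" "\<forall>y'\<in>M. dist y' z < \<eta> \<longrightarrow> \<not> (\<exists>\<epsilon>>0. M \<inter> ball y' \<epsilon> \<subseteq> H)"
        unfolding H_def by blast
      have "ball z \<eta> \<inter> Og = {}"
      proof (rule ccontr)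
        assume "ball z \<eta> \<inter> Og \<noteq> {}"
        then obtain y' where y': "y' \<in> ball z \<eta>" "y' \<in> Og" by blast
        then have "y' \<in> M" "dist y' z < \<eta>" "\<exists>\<epsilon>>0. M \<inter> ball y' \<epsilon> \<subseteq> H"
          unfolding Og_def by (auto simp: dist_commute)
        then show False using \<eta>(2) by blast
      qed
      then have "ball z \<eta> \<in> {ball y \<eta> | y \<eta>. y \<in> M \<and> \<eta> > 0 \<and> ball y \<eta> \<inter> Og = {}}"
        using z \<eta>(1) by blast
      moreover have "z \<in> ball z \<eta>" using \<eta>(1) by simp
      ultimately have "z \<in> U2" unfolding U2_def by (rule UnionI)
      then show ?thesis by blast
    qed
  qed
  have "ball y0 e0 \<in> {ball y \<epsilon> | y \<epsilon>. y \<in> M \<and> \<epsilon> > 0 \<and> M \<inter> ball y \<epsilon> \<subseteq> H}"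
    using y0 unfolding H_def by blast
  moreover have "y0 \<in> ball y0 e0" using y0(2) by simp
  ultimately have "y0 \<in> U1" unfolding U1_def by (rule UnionI)
  then have "U1 \<inter> M \<noteq> {}" using y0 by blast
  then have "U2 \<inter> M = {}" using connectedD[OF conn o1 o2 dis cov] by blast
  then have "M \<subseteq> Og" using cov U1O by blast
  show ?thesis
  proof
    fix z assume z: "z \<in> M"
    then have "z \<in> Og" using \<open>M \<subseteq> Og\<close> by blast
    then obtain \<epsilon> where "\<epsilon> > 0" "M \<inter> ball z \<epsilon> \<subseteq> H" unfolding Og_def by blast
    then have "z \<in> H" using z by auto
    then show "z \<in> {w. w$p = w$q}" unfolding H_def .
  qed
qed

lemma delta_fix:
  assumes "w \<in> Delta \<sigma>" shows "w $ (\<sigma> m) = w $ m"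
proof -
  have "{j. w $ j = w $ m} \<in> vec_partition w" unfolding vec_partition_def by blast
  then have "{j. w $ j = w $ m} \<in> perm_partition \<sigma>" using assms by (simp add: Delta_def)
  then obtain c where c: "{j. w $ j = w $ m} = {j. \<exists>k::nat. (\<sigma> ^^ k) c = j}"
    unfolding perm_partition_def by blast
  have "m \<in> {j. w $ j = w $ m}" by simp
  then obtain k where "(\<sigma> ^^ k) c = m" using c by blast
  then have "(\<sigma> ^^ Suc k) c = \<sigma> m" by simp
  then have "\<sigma> m \<in> {j. w $ j = w $ m}" using c by blast
  then show ?thesis by simp
qed

lemma chain_fix:
  assumes "\<forall>m. w $ (\<sigma> m) = w $ m" shows "w $ ((\<sigma> ^^ k) c) = w $ c"
  by (induction k) (simp_all add: assms)

theorem theorem3p28: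
  fixes M :: "(real^'n::{finite,linorder}) set" and \<sigma> :: "'n \<Rightarrow> 'n"
  assumes "locally_symmetric_C2_submanifold M"
    and "characteristic_perm M \<sigma>"
  shows "\<forall>B\<in>perm_partition \<sigma>. \<forall>i j k. i \<in> B \<and> k \<in> B \<and> i \<le> j \<and> j \<le> k \<longrightarrow> j \<in> B"
proof -
  have conn: "connected M" and sub: "C2_submanifold M" and ls: "locally_symmetric M"
    using assms(1) unfolding locally_symmetric_C2_submanifold_def by simp_all
  have sym: "\<forall>x\<in>M. \<exists>\<delta>>0. \<forall>y\<in>M \<inter> ball x \<delta>. \<forall>\<sigma>.
        \<sigma> permutes (UNIV :: 'n set) \<and> perm_act \<sigma> y = y \<longrightarrow>
        perm_act \<sigma> ` (M \<inter> ball x \<delta>) = M \<inter> ball x \<delta>"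
    using ls unfolding locally_symmetric_def by (rule conjunct2)
  have "M \<inter> ordered_cone \<noteq> {}" using ls unfolding locally_symmetric_def by (rule conjunct1)
  then obtain x where x: "x \<in> M" "x \<in> ordered_cone" by blast
  obtain xb \<delta> where xb: "xb \<in> M" "\<delta> > 0" "M \<inter> ball xb \<delta> \<subseteq> Delta \<sigma>"
    using assms(2) unfolding characteristic_perm_def by blast
  have Lsig: "\<forall>w\<in>M. \<forall>m. w $ (\<sigma> m) = w $ m"
  proof (intro ballI allI)
    fix w m assume w: "w \<in> M"
    have "M \<inter> ball xb \<delta> \<subseteq> {w. w $ (\<sigma> m) = w $ m}" using xb(3) delta_fix by blast
    then have "M \<subseteq> {w. w $ (\<sigma> m) = w $ m}" using core[OF conn sub sym xb(1,2)] by blast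
    then show "w $ (\<sigma> m) = w $ m" using w by blast
  qed
  have "xb \<in> M \<inter> ball xb \<delta>" using xb(1,2) by simp
  then have xbD: "xb \<in> Delta \<sigma>" using xb(3) by blast
  show ?thesis
  proof (intro ballI allI impI)
    fix B i j k assume B: "B \<in> perm_partition \<sigma>" and ijk: "i \<in> B \<and> k \<in> B \<and> i \<le> j \<and> j \<le> k"
    obtain b where b: "B = {j. \<exists>n::nat. (\<sigma> ^^ n) b = j}" using B unfolding perm_partition_def by blast
    show "j \<in> B"
    proof (rule ccontr)
      assume jB: "j \<notin> B"
      have ij: "i \<noteq> j" "k \<noteq> j" "i \<noteq> k" using ijk jB by auto
      have vb: "w $ i = w $ b" "w $ k = w $ b" if "w \<in> M" for w
      proof -
        obtain n1 where n1: "(\<sigma> ^^ n1) b = i" using ijk b by blast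
        obtain n2 where n2: "(\<sigma> ^^ n2) b = k" using ijk b by blast
        have cf: "\<forall>m. w $ (\<sigma> m) = w $ m" using Lsig that by blast
        show "w $ i = w $ b" using chain_fix[OF cf, of n1 b] n1 by simp
        show "w $ k = w $ b" using chain_fix[OF cf, of n2 b] n2 by simp
      qed
      have oc: "\<forall>i j. i \<le> j \<longrightarrow> x $ j \<le> x $ i" using x(2) unfolding ordered_cone_def by simp
      have "x $ j \<le> x $ i" "x $ k \<le> x $ j" using oc ijk by blast+
      then have xjk: "x $ j = x $ k" using vb[OF x(1)] by linarith
      obtain \<delta>x where \<delta>x: "\<delta>x > 0" "\<forall>y\<in>M \<inter> ball x \<delta>x. \<forall>\<sigma>.
        \<sigma> permutes (UNIV :: 'n set) \<and> perm_act \<sigma> y = y \<longrightarrow>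
        perm_act \<sigma> ` (M \<inter> ball x \<delta>x) = M \<inter> ball x \<delta>x" using sym x(1) by blast
      have px: "perm_act (Transposition.transpose j k) x = x"
        using xjk by (simp add: perm_act_sw sw_fix_iff)
      have "x \<in> M \<inter> ball x \<delta>x" using x \<delta>x by simp
      then have img: "sw j k ` (M \<inter> ball x \<delta>x) = M \<inter> ball x \<delta>x"
        using \<delta>x(2)[rule_format, OF \<open>x \<in> M \<inter> ball x \<delta>x\<close>, of "Transposition.transpose j k"]
          px permutes_swap_id[of j UNIV k] unfolding perm_act_sw by simp
      have "M \<inter> ball x \<delta>x \<subseteq> {w. w $ i = w $ j}"
      proof
        fix w assume w: "w \<in> M \<inter> ball x \<delta>x"
        then have "sw j k w \<in> M" using img by blast
        then have "sw j k w $ i = sw j k w $ k" using vb(1) vb(2) by simp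
        moreover have "sw j k w $ i = w $ i" using ij by (simp add: sw_nth Transposition.transpose_def)
        moreover have "sw j k w $ k = w $ j" by (simp add: sw_nth Transposition.transpose_def)
        ultimately have "w $ i = w $ j" by simp
        then show "w \<in> {w. w $ i = w $ j}" by simp
      qed
      then have "M \<subseteq> {w. w $ i = w $ j}" using core[OF conn sub sym x(1) \<delta>x(1)] by blast
      then have e: "xb $ i = xb $ j" using xb(1) by blast
      have "B \<in> vec_partition xb" using B xbD by (simp add: Delta_def)
      then obtain c where c: "B = {m. xb $ m = xb $ c}" unfolding vec_partition_def by blast
      have "xb $ i = xb $ c" using ijk c by blast
      then have "j \<in> B" using e c by simp
      then show False using jB by simp
    qed
  qed
qed

end
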